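(* Let $(S,\mathcal{S})$ be a measurable space, let ${\sf F}\subseteq\mathcal{P}(S)$, and let $\mathcal{E}$ be a $\cap$-stable collection with $\sigma(\mathcal{E})=\mathcal{S}$. If there exist $E_n\in\mathcal{E}\cap {\sf F}$, $n\in\mathbb{N}$, with $S=\bigcup_{n\in\mathbb{N}}E_{n}$, then $\{N^{\sf F}_{E}\mid E\in\mathcal{E}\}$ generates $\mathcal{C}^{\sf F}(\mathcal{S})$, i.e. $\sigma(N^{\sf F}_E\mid E\in\mathcal{E})=\mathcal{C}^{\sf F}(\mathcal{S})$.
   Context: $C(S)$ is the set of countable subsets of $S$. $C^{\sf F}(S)=\{M\in C(S)\mid |M\cap A|<\infty \text{ for all } A\in{\sf F}\}$. For $A\subseteq S$, $N^{\sf F}_A:C^{\sf F}(S)\to\mathbb{N}_0\cup\{\infty\}$, $M\mapsto|M\cap A|$. For nonempty $\mathcal{T}\subseteq\mathcal{P}(S)$, $\mathcal{C}^{\sf F}(\mathcal{T})=\sigma(N^{\sf F}_A\mid A\in\mathcal{T})$, a $\sigma$-field on $C^{\sf F}(S)$. *)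

theory Defs
  imports "HOL-Analysis.Analysis" "HOL-Library.Extended_Nat"
begin

definition countable_subsets :: "'a set \<Rightarrow> 'a set set" where
  "countable_subsets S = {M. M \<subseteq> S \<and> countable M}"

definition CF :: "'a set \<Rightarrow> 'a set set \<Rightarrow> 'a set set" where
  "CF S F = {M \<in> countable_subsets S. \<forall>A\<in>F. finite (M \<inter> A)}"

definition NF :: "'a set \<Rightarrow> 'a set \<Rightarrow> enat" where
  "NF A M = (if finite (M \<inter> A) then enat (card (M \<inter> A)) else \<infinity>)"

text \<open>\<C>^F(T) = \<sigma>(N^F_A | A \<in> T) on C^F(S), the codomain carrying the power-set \<sigma>-field.\<close>
definition CF_sigma :: "'a set \<Rightarrow> 'a set set \<Rightarrow> 'a set set \<Rightarrow> 'a set set set" where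
  "CF_sigma S F T = sigma_sets (CF S F)
     {NF A -` B \<inter> CF S F | A B. A \<in> T}"

end

theory Submission
  imports Defs
begin

lemma NF_emeasure:
  "ennreal_of_enat (NF X M) = emeasure (count_space UNIV) (M \<inter> X)"
  by (simp add: NF_def emeasure_count_space)

theorem theorem4p1:
  fixes S :: "'a set" and \<Sigma> F \<E> :: "'a set set"
  assumes "sigma_algebra S \<Sigma>"
    and "F \<subseteq> Pow S"
    and "\<E> \<subseteq> Pow S"
    and "Int_stable \<E>"
    and "sigma_sets S \<E> = \<Sigma>"
    and "\<exists>En :: nat \<Rightarrow> 'a set. (\<forall>n. En n \<in> \<E> \<inter> F) \<and> S = (\<Union>n. En n)"
  shows "CF_sigma S F \<E> = CF_sigma S F \<Sigma>"
proof -
  obtain En :: "nat \<Rightarrow> 'a set" where En0: "\<forall>n. En n \<in> \<E> \<inter> F" and SU: "S = (\<Union>n. En n)"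
    using assms(6) by (elim exE conjE)
  have En: "\<And>n. En n \<in> \<E>" "\<And>n. En n \<in> F" using En0 by auto
  define C where "C = CF S F"
  define G where "G = {NF A -` B \<inter> C | A B. A \<in> \<E>}"
  define Ms where "Ms = sigma C G"
  have GP: "G \<subseteq> Pow C" unfolding G_def by auto
  have sM: "sets Ms = CF_sigma S F \<E>"
  proof -
    have "sets Ms = sigma_sets C G" unfolding Ms_def using GP by (rule sets_measure_of)
    then show ?thesis unfolding CF_sigma_def C_def G_def by simp
  qed
  have spM: "space Ms = C" unfolding Ms_def using GP by (rule space_measure_of)
  have ESig: "\<E> \<subseteq> \<Sigma>" using assms(5) sigma_sets.Basic by blast
  have CS: "\<And>M. M \<in> C \<Longrightarrow> M \<subseteq> S" unfolding C_def CF_def countable_subsets_def by auto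
  have Cfin: "\<And>M A. M \<in> C \<Longrightarrow> A \<in> F \<Longrightarrow> finite (M \<inter> A)" unfolding C_def CF_def by auto
  define g where "g X M = emeasure (count_space (UNIV::'a set)) (M \<inter> X)" for X M :: "'a set"
  have gbasic: "(g X) \<in> borel_measurable Ms" if X: "X \<in> \<E>" for X
  proof (rule measurableI)
    fix x assume "x \<in> space Ms" then show "g X x \<in> space borel" by simp
  next
    fix B :: "ennreal set" assume "B \<in> sets borel"
    have "g X -` B \<inter> space Ms = NF X -` (ennreal_of_enat -` B) \<inter> C"
      by (auto simp: spM g_def NF_emeasure[symmetric])
    also have "\<dots> \<in> G" unfolding G_def using X by blast
    finally show "g X -` B \<inter> space Ms \<in> sets Ms"
      unfolding Ms_def using GP by (simp add: sigma_sets.Basic)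
  qed
  have P: "\<forall>n. g (A \<inter> En n) \<in> borel_measurable Ms" if A: "A \<in> \<Sigma>" for A
    using assms(4) assms(3) A[folded assms(5)]
  proof (induction rule: sigma_sets_induct_disjoint)
    case (basic A)
    show ?case
    proof
      fix n
      have "A \<inter> En n \<in> \<E>" using assms(4) En(1)[of n] basic.hyps by (auto simp: Int_stable_def)
      then show "g (A \<inter> En n) \<in> borel_measurable Ms" by (rule gbasic)
    qed
  next
    case empty
    then show ?case by (simp add: g_def)
  next
    case (compl A)
    show ?case
    proof
      fix n
      have "g ((S - A) \<inter> En n) \<in> borel_measurable Ms \<longleftrightarrow>
            (\<lambda>M. g (En n) M - g (A \<inter> En n) M) \<in> borel_measurable Ms"
      proof (rule measurable_cong)
        fix M assume "M \<in> space Ms"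
        then have M: "M \<in> C" by (simp add: spM)
        have f: "finite (M \<inter> En n)" using Cfin[OF M En(2)] .
        have e: "M \<inter> ((S - A) \<inter> En n) = (M \<inter> En n) - (M \<inter> (A \<inter> En n))" using CS[OF M] by auto
        have "emeasure (count_space (UNIV::'a set)) ((M \<inter> En n) - (M \<inter> (A \<inter> En n))) =
           emeasure (count_space UNIV) (M \<inter> En n) - emeasure (count_space UNIV) (M \<inter> (A \<inter> En n))"
          by (rule emeasure_Diff) (auto simp: emeasure_count_space f intro: finite_subset[OF _ f])
        then show "g ((S - A) \<inter> En n) M = g (En n) M - g (A \<inter> En n) M"
          unfolding g_def e by simp
      qed
      also have "\<dots>" using gbasic[OF En(1)] compl.IH[rule_format, of n] by measurable
      finally show "g ((S - A) \<inter> En n) \<in> borel_measurable Ms" .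
    qed
  next
    case (union A)
    show ?case
    proof
      fix n
      have "g ((\<Union>i. A i) \<inter> En n) \<in> borel_measurable Ms \<longleftrightarrow>
            (\<lambda>M. \<Sum>i. g (A i \<inter> En n) M) \<in> borel_measurable Ms"
      proof (rule measurable_cong)
        fix M assume "M \<in> space Ms"
        have "M \<inter> ((\<Union>i. A i) \<inter> En n) = (\<Union>i. M \<inter> (A i \<inter> En n))" by auto
        moreover have "disjoint_family (\<lambda>i. M \<inter> (A i \<inter> En n))"
          using union.hyps(1) unfolding disjoint_family_on_def by auto
        ultimately show "g ((\<Union>i. A i) \<inter> En n) M = (\<Sum>i. g (A i \<inter> En n) M)"
          unfolding g_def by (simp add: suminf_emeasure)
      qed
      also have "\<dots>" using union.IH[rule_format, of _ n] by measurable
      finally show "g ((\<Union>i. A i) \<inter> En n) \<in> borel_measurable Ms" .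
    qed
  qed
  have full: "g A \<in> borel_measurable Ms" if A: "A \<in> \<Sigma>" for A
  proof -
    interpret sa: sigma_algebra S \<Sigma> by (rule assms(1))
    define D where "D = disjointed En"
    have DSig: "D n \<in> \<Sigma>" for n
      using sa.range_disjointed_sets[of En] En(1) ESig unfolding D_def by auto
    have "g A \<in> borel_measurable Ms \<longleftrightarrow>
            (\<lambda>M. \<Sum>n. g ((A \<inter> D n) \<inter> En n) M) \<in> borel_measurable Ms"
    proof (rule measurable_cong)
      fix M assume "M \<in> space Ms"
      then have M: "M \<subseteq> S" using CS by (simp add: spM)
      have DE: "D n \<subseteq> En n" for n unfolding D_def by (rule disjointed_subset)
      have UD: "S = (\<Union>n. D n)" using SU UN_disjointed_eq[of En] unfolding D_def by simp
      have "M \<inter> A = (\<Union>n. M \<inter> (A \<inter> D n \<inter> En n))"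
      proof
        show "M \<inter> A \<subseteq> (\<Union>n. M \<inter> (A \<inter> D n \<inter> En n))"
        proof
          fix x assume x: "x \<in> M \<inter> A"
          then have "x \<in> S" using M by auto
          then obtain n where "x \<in> D n" using UD by auto
          then show "x \<in> (\<Union>n. M \<inter> (A \<inter> D n \<inter> En n))" using x DE[of n] by auto
        qed
      qed auto
      moreover have "disjoint_family (\<lambda>n. M \<inter> (A \<inter> D n \<inter> En n))"
        using disjoint_family_disjointed[of En] unfolding D_def disjoint_family_on_def by auto
      ultimately show "g A M = (\<Sum>n. g ((A \<inter> D n) \<inter> En n) M)"
        unfolding g_def by (simp add: suminf_emeasure)
    qed
    also have "\<dots>"
    proof -
      have "g ((A \<inter> D n) \<inter> En n) \<in> borel_measurable Ms" for n
      proof -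
        have "A \<inter> D n \<in> \<Sigma>" using A DSig[of n] by (rule sa.Int)
        from P[OF this] show ?thesis by blast
      qed
      then show ?thesis by measurable
    qed
    finally show ?thesis .
  qed
  have "CF_sigma S F \<Sigma> \<subseteq> CF_sigma S F \<E>"
    unfolding CF_sigma_def
  proof (rule sigma_sets_mono)
    show "{NF A -` B \<inter> CF S F |A B. A \<in> \<Sigma>} \<subseteq> sigma_sets (CF S F) {NF A -` B \<inter> CF S F |A B. A \<in> \<E>}"
    proof safe
      fix A and B :: "enat set" assume A: "A \<in> \<Sigma>"
      have eq: "NF A -` B \<inter> C = (\<Union>k\<in>B. g A -` {ennreal_of_enat k} \<inter> space Ms)"
        by (auto simp: spM g_def NF_emeasure[symmetric] ennreal_of_enat_inj)
      have "g A -` {ennreal_of_enat k} \<inter> space Ms \<in> sets Ms" for k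
        by (rule measurable_sets[OF full[OF A]]) simp
      then have "NF A -` B \<inter> C \<in> sets Ms"
        unfolding eq by (intro sets.countable_UN) auto
      then show "NF A -` B \<inter> CF S F \<in> sigma_sets (CF S F) {NF A -` B \<inter> CF S F |A B. A \<in> \<E>}"
        using sM unfolding CF_sigma_def C_def by simp
    qed
  qed
  moreover have "CF_sigma S F \<E> \<subseteq> CF_sigma S F \<Sigma>"
    unfolding CF_sigma_def by (rule sigma_sets_subseteq) (use ESig in blast)
  ultimately show ?thesis by blast
qed

end
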